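(* Let $R$ be a commutative ring and $M$ an $R$-module, and let $\mathbf F(M)$ be the set of $R$-submodules of $M$ with its Zariski topology. Then: (1) the set $\mathbf f(M)$ of finitely generated submodules of $M$ is dense in $\mathbf F(M)$ with respect to the constructible topology; (2) $\mathbf f(M)$, with the subspace topology induced by the Zariski topology, is a spectral space if and only if $M$ is a Noetherian $R$-module.
   Context: The Zariski topology on $\mathbf F(M)$ is the topology with basis of open sets $\mathcal B(x_1,\ldots,x_n):=\{N\in\mathbf F(M)\mid x_1,\ldots,x_n\in N\}$, $x_1,\ldots,x_n\in M$; with it $\mathbf F(M)$ is a spectral space (a space homeomorphic to the prime spectrum of a commutative ring). The constructible topology on a spectral space is the coarsest topology in which all open quasi-compact subsets are clopen. *)

theory Defs
  imports "HOL-Analysis.Analysis" "HOL-Algebra.Module"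
begin

definition submods :: "('a, 'c) ring_scheme \<Rightarrow> ('a, 'b, 'd) module_scheme \<Rightarrow> 'b set set" where
  "submods R M = {N. submodule N R M}"

definition gen_submod :: "('a, 'c) ring_scheme \<Rightarrow> ('a, 'b, 'd) module_scheme \<Rightarrow> 'b set \<Rightarrow> 'b set" where
  "gen_submod R M X = \<Inter>{P. submodule P R M \<and> X \<subseteq> P}"

definition fg_submods :: "('a, 'c) ring_scheme \<Rightarrow> ('a, 'b, 'd) module_scheme \<Rightarrow> 'b set set" where
  "fg_submods R M = {N. submodule N R M \<and>
      (\<exists>X. finite X \<and> X \<subseteq> carrier M \<and> N = gen_submod R M X)}"

definition zariski_basic :: "('a, 'c) ring_scheme \<Rightarrow> ('a, 'b, 'd) module_scheme \<Rightarrow> 'b set \<Rightarrow> 'b set set" where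
  "zariski_basic R M X = {N \<in> submods R M. X \<subseteq> N}"

definition zariski_submods :: "('a, 'c) ring_scheme \<Rightarrow> ('a, 'b, 'd) module_scheme \<Rightarrow> 'b set topology" where
  "zariski_submods R M =
     topology_generated_by {zariski_basic R M X | X. finite X \<and> X \<subseteq> carrier M}"

definition constructible_topology :: "'a topology \<Rightarrow> 'a topology" where
  "constructible_topology X =
     topology_generated_by
       ({U. openin X U \<and> compactin X U} \<union> {topspace X - U | U. openin X U \<and> compactin X U})"

definition irreducible_in :: "'a topology \<Rightarrow> 'a set \<Rightarrow> bool" where
  "irreducible_in X Z \<longleftrightarrow> Z \<noteq> {} \<and> Z \<subseteq> topspace X \<and>
     (\<forall>A B. closedin X A \<and> closedin X B \<and> Z \<subseteq> A \<union> B \<longrightarrow> Z \<subseteq> A \<or> Z \<subseteq> B)"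

text \<open>Spectral space, via Hochster's intrinsic characterization.\<close>
definition spectral_space :: "'a topology \<Rightarrow> bool" where
  "spectral_space X \<longleftrightarrow>
     t0_space X \<and> compact_space X \<and>
     (\<forall>U V. openin X U \<and> compactin X U \<and> openin X V \<and> compactin X V \<longrightarrow> compactin X (U \<inter> V)) \<and>
     (\<forall>W. openin X W \<longrightarrow> (\<exists>\<C>. (\<forall>C\<in>\<C>. openin X C \<and> compactin X C) \<and> W = \<Union>\<C>)) \<and>
     (\<forall>Z. closedin X Z \<and> irreducible_in X Z \<longrightarrow> (\<exists>!x. x \<in> topspace X \<and> X closure_of {x} = Z))"

definition noetherian_module :: "('a, 'c) ring_scheme \<Rightarrow> ('a, 'b, 'd) module_scheme \<Rightarrow> bool" where
  "noetherian_module R M \<longleftrightarrow>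
     (\<forall>C :: nat \<Rightarrow> 'b set. (\<forall>n. submodule (C n) R M) \<and> (\<forall>n. C n \<subseteq> C (Suc n)) \<longrightarrow>
        (\<exists>k. \<forall>n\<ge>k. C n = C k))"

end

theory Submission
  imports Defs
begin


lemma submod_Inter:
  assumes M: "module R M" and ne: "\<P> \<noteq> {}" and sub: "\<And>P. P \<in> \<P> \<Longrightarrow> submodule P R M"
  shows "submodule (\<Inter>\<P>) R M"
proof (rule module.submoduleI[OF M])
  obtain P0 where P0: "P0 \<in> \<P>" using ne by blast
  show "\<Inter>\<P> \<subseteq> carrier M" using module.submoduleE(1)[OF M sub[OF P0]] P0 by blast
  show "\<zero>\<^bsub>M\<^esub> \<in> \<Inter>\<P>" using sub subgroup.one_closed[OF submodule.axioms(1)] by fastforce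
  show "\<ominus>\<^bsub>M\<^esub> a \<in> \<Inter>\<P>" if "a \<in> \<Inter>\<P>" for a using that module.submoduleE(3)[OF M sub] by blast
  show "a \<oplus>\<^bsub>M\<^esub> b \<in> \<Inter>\<P>" if "a \<in> \<Inter>\<P>" "b \<in> \<Inter>\<P>" for a b using that module.submoduleE(5)[OF M sub] by blast
  show "a \<odot>\<^bsub>M\<^esub> x \<in> \<Inter>\<P>" if "a \<in> carrier R" "x \<in> \<Inter>\<P>" for a x using that module.submoduleE(4)[OF M sub] by blast
qed

lemma chain_mono: "(\<And>n. C n \<subseteq> C (Suc n)) \<Longrightarrow> m \<le> n \<Longrightarrow> C m \<subseteq> C n"
  by (rule lift_Suc_mono_le)

lemma submod_chain:
  assumes M: "module R M" and sub: "\<And>n. submodule (C n) R M" and ch: "\<And>n. C n \<subseteq> C (Suc n)"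
  shows "submodule (\<Union>(range C)) R M"
proof (rule module.submoduleI[OF M])
  show "\<Union>(range C) \<subseteq> carrier M" using module.submoduleE(1)[OF M sub] by blast
  show "\<zero>\<^bsub>M\<^esub> \<in> \<Union>(range C)" using sub subgroup.one_closed[OF submodule.axioms(1)] by fastforce
  show "\<ominus>\<^bsub>M\<^esub> a \<in> \<Union>(range C)" if "a \<in> \<Union>(range C)" for a using that module.submoduleE(3)[OF M sub] by blast
  show "a \<odot>\<^bsub>M\<^esub> x \<in> \<Union>(range C)" if "a \<in> carrier R" "x \<in> \<Union>(range C)" for a x using that module.submoduleE(4)[OF M sub] by blast
  show "a \<oplus>\<^bsub>M\<^esub> b \<in> \<Union>(range C)" if ab: "a \<in> \<Union>(range C)" "b \<in> \<Union>(range C)" for a b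
  proof -
    obtain i j where "a \<in> C i" "b \<in> C j" using ab by blast
    then have "a \<in> C (max i j)" "b \<in> C (max i j)" using chain_mono[of C, OF ch] by (meson max.cobounded1 max.cobounded2 subsetD)+
    then show ?thesis using module.submoduleE(5)[OF M sub] by blast
  qed
qed

lemma finite_in_chain:
  assumes ch: "\<And>n. C n \<subseteq> C (Suc n)" and "finite X" and "X \<subseteq> \<Union>(range C)"
  shows "\<exists>k. X \<subseteq> C k"
  using assms(2,3)
proof (induction X rule: finite_induct)
  case empty then show ?case by blast
next
  case (insert x X)
  then obtain k j where "X \<subseteq> C k" "x \<in> C j" by blast
  then have "insert x X \<subseteq> C (max k j)" using chain_mono[of C, OF ch] by (meson insert_subset max.cobounded1 max.cobounded2 subsetD subset_trans)
  then show ?case by blast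
qed

lemma gen_sub: "module R M \<Longrightarrow> X \<subseteq> carrier M \<Longrightarrow> submodule (gen_submod R M X) R M"
  unfolding gen_submod_def
  by (rule submod_Inter) (auto intro: module.carrier_is_submodule)

lemma gen_incl: "X \<subseteq> gen_submod R M X"
  unfolding gen_submod_def by blast

lemma gen_min: "submodule P R M \<Longrightarrow> X \<subseteq> P \<Longrightarrow> gen_submod R M X \<subseteq> P"
  unfolding gen_submod_def by blast

lemma submod_carrier: "module R M \<Longrightarrow> submodule P R M \<Longrightarrow> P \<subseteq> carrier M"
  by (rule module.submoduleE(1))

lemma gen_fg: "module R M \<Longrightarrow> finite X \<Longrightarrow> X \<subseteq> carrier M \<Longrightarrow> gen_submod R M X \<in> fg_submods R M"
  unfolding fg_submods_def using gen_sub by blast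

lemma fg_sub: "fg_submods R M \<subseteq> submods R M"
  unfolding fg_submods_def submods_def by blast



lemma basic_sub: "zariski_basic R M X \<subseteq> submods R M"
  unfolding zariski_basic_def by blast

lemma basic_empty: "zariski_basic R M {} = submods R M"
  unfolding zariski_basic_def by blast

lemma basic_Un: "zariski_basic R M X \<inter> zariski_basic R M Y = zariski_basic R M (X \<union> Y)"
  unfolding zariski_basic_def by blast

lemma open_basic: "finite X \<Longrightarrow> X \<subseteq> carrier M \<Longrightarrow> openin (zariski_submods R M) (zariski_basic R M X)"
  unfolding zariski_submods_def by (rule topology_generated_by_Basis) blast

lemma topspace_Z: "topspace (zariski_submods R M) = submods R M"
proof
  show "topspace (zariski_submods R M) \<subseteq> submods R M"
    unfolding zariski_submods_def topology_generated_by_topspace using basic_sub by blast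
  show "submods R M \<subseteq> topspace (zariski_submods R M)"
  proof -
    have "openin (zariski_submods R M) (zariski_basic R M {})" by (rule open_basic) auto
    then show ?thesis using openin_subset basic_empty by metis
  qed
qed

lemma open_up:
  assumes "openin (zariski_submods R M) U" "N \<in> U"
  shows "\<exists>X. finite X \<and> X \<subseteq> carrier M \<and> X \<subseteq> N \<and> zariski_basic R M X \<subseteq> U"
proof -
  have "generate_topology_on {zariski_basic R M X | X. finite X \<and> X \<subseteq> carrier M} U"
    using assms(1) unfolding zariski_submods_def by (rule openin_topology_generated_by)
  then show ?thesis using assms(2)
  proof (induction arbitrary: N rule: generate_topology_on.induct)
    case Empty then show ?case by simp
  next
    case (Int a b)
    obtain X where X: "finite X \<and> X \<subseteq> carrier M \<and> X \<subseteq> N \<and> zariski_basic R M X \<subseteq> a"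
      using Int.IH(1)[of N] Int.prems by blast
    obtain Y where Y: "finite Y \<and> Y \<subseteq> carrier M \<and> Y \<subseteq> N \<and> zariski_basic R M Y \<subseteq> b"
      using Int.IH(2)[of N] Int.prems by blast
    have "zariski_basic R M (X \<union> Y) \<subseteq> a \<inter> b" using X Y basic_Un[of R M X Y] by blast
    then show ?case using X Y by (intro exI[of _ "X \<union> Y"]) simp
  next
    case (UN K)
    obtain k where k: "k \<in> K" "N \<in> k" using UN.prems by blast
    obtain X where X: "finite X \<and> X \<subseteq> carrier M \<and> X \<subseteq> N \<and> zariski_basic R M X \<subseteq> k"
      using UN.IH[OF k] by blast
    then show ?case using k by blast
  next
    case (Basis s)
    then show ?case unfolding zariski_basic_def by auto
  qed
qed

lemma open_upward:
  assumes "openin (zariski_submods R M) U" "N \<in> U" "P \<in> submods R M" "N \<subseteq> P"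
  shows "P \<in> U"
  using open_up[OF assms(1,2)] assms(3,4) unfolding zariski_basic_def by blast

lemma open_char:
  assumes "U \<subseteq> submods R M" "\<And>N. N \<in> U \<Longrightarrow> \<exists>X. finite X \<and> X \<subseteq> carrier M \<and> X \<subseteq> N \<and> zariski_basic R M X \<subseteq> U"
  shows "openin (zariski_submods R M) U"
proof -
  have eq: "U = \<Union>{zariski_basic R M X | X. finite X \<and> X \<subseteq> carrier M \<and> zariski_basic R M X \<subseteq> U}"
  proof
    show "U \<subseteq> \<Union>{zariski_basic R M X | X. finite X \<and> X \<subseteq> carrier M \<and> zariski_basic R M X \<subseteq> U}"
    proof
      fix N assume N: "N \<in> U"
      from assms(2)[OF N] obtain X where X: "finite X \<and> X \<subseteq> carrier M \<and> X \<subseteq> N \<and> zariski_basic R M X \<subseteq> U" by (elim exE)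
      then have "N \<in> zariski_basic R M X" using N assms(1) unfolding zariski_basic_def by blast
      then show "N \<in> \<Union>{zariski_basic R M X | X. finite X \<and> X \<subseteq> carrier M \<and> zariski_basic R M X \<subseteq> U}" using X by blast
    qed
    show "\<Union>{zariski_basic R M X | X. finite X \<and> X \<subseteq> carrier M \<and> zariski_basic R M X \<subseteq> U} \<subseteq> U"
    proof (rule Union_least)
      fix S assume "S \<in> {zariski_basic R M X | X. finite X \<and> X \<subseteq> carrier M \<and> zariski_basic R M X \<subseteq> U}"
      then show "S \<subseteq> U" by blast
    qed
  qed
  have op: "openin (zariski_submods R M) (\<Union>{zariski_basic R M X | X. finite X \<and> X \<subseteq> carrier M \<and> zariski_basic R M X \<subseteq> U})"
  proof (rule openin_Union)
    fix S assume "S \<in> {zariski_basic R M X | X. finite X \<and> X \<subseteq> carrier M \<and> zariski_basic R M X \<subseteq> U}"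
    then obtain X where "S = zariski_basic R M X" "finite X" "X \<subseteq> carrier M" by blast
    then show "openin (zariski_submods R M) S" using open_basic by blast
  qed
  show ?thesis by (subst eq) (rule op)
qed

lemma closed_down:
  assumes "closedin (zariski_submods R M) A" "P \<in> A" "Q \<in> submods R M" "Q \<subseteq> P"
  shows "Q \<in> A"
proof (rule ccontr)
  assume "Q \<notin> A"
  then have qin: "Q \<in> topspace (zariski_submods R M) - A" using assms(3) by (simp add: topspace_Z)
  have op: "openin (zariski_submods R M) (topspace (zariski_submods R M) - A)" using assms(1) by (rule openin_diff[OF openin_topspace])
  have "P \<in> topspace (zariski_submods R M)" using closedin_subset[OF assms(1)] assms(2) by blast
  then have Psub: "P \<in> submods R M" by (simp add: topspace_Z)
  have "P \<in> topspace (zariski_submods R M) - A"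
    by (rule open_upward[OF op qin Psub assms(4)])
  then show False using assms(2) by blast
qed

lemma closure_single:
  assumes M: "module R M" and Q: "Q \<in> submods R M"
  shows "zariski_submods R M closure_of {Q} = {P \<in> submods R M. P \<subseteq> Q}"
proof
  show "zariski_submods R M closure_of {Q} \<subseteq> {P \<in> submods R M. P \<subseteq> Q}"
  proof
    fix P assume P: "P \<in> zariski_submods R M closure_of {Q}"
    have "P \<in> topspace (zariski_submods R M)" by (rule subsetD[OF closure_of_subset_topspace P])
    then have Ps: "P \<in> submods R M" by (simp add: topspace_Z)
    have "P \<subseteq> Q"
    proof
      fix x assume x: "x \<in> P"
      have xc: "x \<in> carrier M" using x submod_carrier[OF M, of P] Ps by (auto simp: submods_def)
      have "openin (zariski_submods R M) (zariski_basic R M {x})" using xc by (intro open_basic) auto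
      moreover have "P \<in> zariski_basic R M {x}" using Ps x unfolding zariski_basic_def by blast
      ultimately have "Q \<in> zariski_basic R M {x}" using P unfolding closure_of_def by blast
      then show "x \<in> Q" unfolding zariski_basic_def by blast
    qed
    then show "P \<in> {P \<in> submods R M. P \<subseteq> Q}" using Ps by blast
  qed
  show "{P \<in> submods R M. P \<subseteq> Q} \<subseteq> zariski_submods R M closure_of {Q}"
    unfolding closure_of_def topspace_Z using open_upward Q by blast
qed

lemma basic_compact:
  assumes M: "module R M" and X: "finite X" "X \<subseteq> carrier M"
  shows "compactin (zariski_submods R M) (zariski_basic R M X)"
  unfolding compactin_def
proof (intro conjI allI impI)
  show "zariski_basic R M X \<subseteq> topspace (zariski_submods R M)" by (simp add: basic_sub topspace_Z)
  fix \<U> assume U: "(\<forall>U\<in>\<U>. openin (zariski_submods R M) U) \<and> zariski_basic R M X \<subseteq> \<Union>\<U>"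
  have gs: "gen_submod R M X \<in> submods R M" using gen_sub[OF M X(2)] by (simp add: submods_def)
  have g: "gen_submod R M X \<in> zariski_basic R M X"
    using gs gen_incl[of X R M] by (simp add: zariski_basic_def)
  then have "gen_submod R M X \<in> \<Union>\<U>" using U by blast
  then obtain V where V: "V \<in> \<U>" "gen_submod R M X \<in> V" by blast
  have Vo: "openin (zariski_submods R M) V" using U V(1) by blast
  have "zariski_basic R M X \<subseteq> V"
  proof
    fix P assume P: "P \<in> zariski_basic R M X"
    then have Ps: "P \<in> submods R M" by (simp add: zariski_basic_def)
    have "gen_submod R M X \<subseteq> P" 
      by (rule gen_min) (use P in \<open>simp_all add: zariski_basic_def submods_def\<close>)
    then show "P \<in> V" by (rule open_upward[OF Vo V(2) Ps])
  qed
  then show "\<exists>\<F>. finite \<F> \<and> \<F> \<subseteq> \<U> \<and> zariski_basic R M X \<subseteq> \<Union>\<F>"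
    using V by (intro exI[of _ "{V}"]) auto
qed

lemma compact_open_fin:
  assumes "openin (zariski_submods R M) U" "compactin (zariski_submods R M) U"
  shows "\<exists>\<X>. finite \<X> \<and> (\<forall>X\<in>\<X>. finite X \<and> X \<subseteq> carrier M) \<and> U = \<Union>(zariski_basic R M ` \<X>)"
proof -
  define A where "A = {X. finite X \<and> X \<subseteq> carrier M \<and> zariski_basic R M X \<subseteq> U}"
  have cov: "U \<subseteq> \<Union>(zariski_basic R M ` A)"
  proof
    fix N assume N: "N \<in> U"
    from open_up[OF assms(1) N] obtain X where X: "finite X \<and> X \<subseteq> carrier M \<and> X \<subseteq> N \<and> zariski_basic R M X \<subseteq> U"
      by (elim exE)
    have "N \<in> topspace (zariski_submods R M)" by (rule subsetD[OF openin_subset[OF assms(1)] N])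
    then have "N \<in> submods R M" by (simp add: topspace_Z)
    then have "N \<in> zariski_basic R M X" using X by (simp add: zariski_basic_def)
    moreover have "X \<in> A" using X by (simp add: A_def)
    ultimately show "N \<in> \<Union>(zariski_basic R M ` A)" by blast
  qed
  have opA: "\<forall>V\<in>zariski_basic R M ` A. openin (zariski_submods R M) V"
  proof
    fix V assume "V \<in> zariski_basic R M ` A"
    then obtain X where "X \<in> A" "V = zariski_basic R M X" by blast
    then show "openin (zariski_submods R M) V" using open_basic[of X M R] by (simp add: A_def)
  qed
  have "\<forall>\<U>. (\<forall>U \<in> \<U>. openin (zariski_submods R M) U) \<and> U \<subseteq> \<Union>\<U>
          \<longrightarrow> (\<exists>\<F>. finite \<F> \<and> \<F> \<subseteq> \<U> \<and> U \<subseteq> \<Union>\<F>)"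
    using assms(2) unfolding compactin_def by (rule conjunct2)
  then have "\<exists>\<F>. finite \<F> \<and> \<F> \<subseteq> zariski_basic R M ` A \<and> U \<subseteq> \<Union>\<F>"
    using opA cov by (elim allE impE) (rule conjI)
  then obtain \<F> where F: "finite \<F>" "\<F> \<subseteq> zariski_basic R M ` A" "U \<subseteq> \<Union>\<F>"
    by (elim exE conjE)
  obtain \<X> where X: "\<X> \<subseteq> A" "finite \<X>" "\<F> = zariski_basic R M ` \<X>"
    using finite_subset_image[OF F(1) F(2)] by (elim exE conjE)
  have "\<Union>(zariski_basic R M ` \<X>) \<subseteq> U" using X(1) by (auto simp: A_def)
  moreover have "U \<subseteq> \<Union>(zariski_basic R M ` \<X>)" using F(3) X(3) by simp
  moreover have "\<forall>X\<in>\<X>. finite X \<and> X \<subseteq> carrier M" using X(1) by (auto simp: A_def)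
  ultimately show ?thesis using X(2) by (intro exI[of _ \<X>]) (simp add: subset_antisym)
qed

lemma compact_open_Int:
  assumes M: "module R M"
    and U: "openin (zariski_submods R M) U" "compactin (zariski_submods R M) U"
    and V: "openin (zariski_submods R M) V" "compactin (zariski_submods R M) V"
  shows "compactin (zariski_submods R M) (U \<inter> V)"
proof -
  obtain \<X> where X: "finite \<X>" "\<forall>X\<in>\<X>. finite X \<and> X \<subseteq> carrier M" "U = \<Union>(zariski_basic R M ` \<X>)"
    using compact_open_fin[OF U] by (elim exE conjE)
  obtain \<Y> where Y: "finite \<Y>" "\<forall>X\<in>\<Y>. finite X \<and> X \<subseteq> carrier M" "V = \<Union>(zariski_basic R M ` \<Y>)"
    using compact_open_fin[OF V] by (elim exE conjE)
  have eq: "U \<inter> V = \<Union>((\<lambda>(X,Y). zariski_basic R M (X \<union> Y)) ` (\<X> \<times> \<Y>))"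
    unfolding X(3) Y(3) by (auto simp flip: basic_Un)
  have "compactin (zariski_submods R M) (\<Union>((\<lambda>(X,Y). zariski_basic R M (X \<union> Y)) ` (\<X> \<times> \<Y>)))"
  proof (rule compactin_Union)
    show "finite ((\<lambda>(X,Y). zariski_basic R M (X \<union> Y)) ` (\<X> \<times> \<Y>))" using X(1) Y(1) by simp
    fix S assume "S \<in> (\<lambda>(X,Y). zariski_basic R M (X \<union> Y)) ` (\<X> \<times> \<Y>)"
    then obtain X Y where XY: "X \<in> \<X>" "Y \<in> \<Y>" "S = zariski_basic R M (X \<union> Y)" by blast
    have "finite (X \<union> Y)" "X \<union> Y \<subseteq> carrier M" using XY X(2) Y(2) by auto
    then show "compactin (zariski_submods R M) S" unfolding XY(3) by (rule basic_compact[OF M])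
  qed
  then show ?thesis by (simp add: eq)
qed



lemma whole_compact_open:
  assumes M: "module R M"
  shows "openin (zariski_submods R M) (submods R M)" "compactin (zariski_submods R M) (submods R M)"
proof -
  have "openin (zariski_submods R M) (zariski_basic R M {})" by (rule open_basic) auto
  then show "openin (zariski_submods R M) (submods R M)" by (simp add: basic_empty)
  have "compactin (zariski_submods R M) (zariski_basic R M {})" by (rule basic_compact[OF M]) auto
  then show "compactin (zariski_submods R M) (submods R M)" by (simp add: basic_empty)
qed

lemma constr_topspace:
  assumes M: "module R M"
  shows "topspace (constructible_topology (zariski_submods R M)) = submods R M"
proof -
  let ?T = "zariski_submods R M"
  have "topspace (constructible_topology ?T) =
     \<Union>({U. openin ?T U \<and> compactin ?T U} \<union> {topspace ?T - U | U. openin ?T U \<and> compactin ?T U})"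
    unfolding constructible_topology_def by (rule topology_generated_by_topspace)
  also have "\<dots> = topspace ?T"
  proof
    show "\<Union>({U. openin ?T U \<and> compactin ?T U} \<union> {topspace ?T - U | U. openin ?T U \<and> compactin ?T U}) \<subseteq> topspace ?T"
      using openin_subset by blast
    have "topspace ?T \<in> {U. openin ?T U \<and> compactin ?T U}"
      using whole_compact_open[OF M] by (simp add: topspace_Z)
    then show "topspace ?T \<subseteq> \<Union>({U. openin ?T U \<and> compactin ?T U} \<union> {topspace ?T - U | U. openin ?T U \<and> compactin ?T U})"
      by blast
  qed
  finally show ?thesis by (simp add: topspace_Z)
qed

lemma constr_open_interval:
  assumes M: "module R M"
    and g: "generate_topology_on ({U. openin (zariski_submods R M) U \<and> compactin (zariski_submods R M) U} \<union>
          {topspace (zariski_submods R M) - U | U. openin (zariski_submods R M) U \<and> compactin (zariski_submods R M) U}) W"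
    and N: "N \<in> W" "N \<in> submods R M"
  shows "\<exists>X. finite X \<and> X \<subseteq> carrier M \<and> X \<subseteq> N \<and> (\<forall>P\<in>submods R M. X \<subseteq> P \<and> P \<subseteq> N \<longrightarrow> P \<in> W)"
  using g N
proof (induction arbitrary: N rule: generate_topology_on.induct)
  case Empty then show ?case by simp
next
  case (Int a b)
  obtain X where X: "finite X \<and> X \<subseteq> carrier M \<and> X \<subseteq> N \<and> (\<forall>P\<in>submods R M. X \<subseteq> P \<and> P \<subseteq> N \<longrightarrow> P \<in> a)"
    using Int.IH(1)[of N] Int.prems by blast
  obtain Y where Y: "finite Y \<and> Y \<subseteq> carrier M \<and> Y \<subseteq> N \<and> (\<forall>P\<in>submods R M. Y \<subseteq> P \<and> P \<subseteq> N \<longrightarrow> P \<in> b)"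
    using Int.IH(2)[of N] Int.prems by blast
  show ?case
  proof (intro exI[of _ "X \<union> Y"] conjI ballI impI)
    show "finite (X \<union> Y)" "X \<union> Y \<subseteq> carrier M" "X \<union> Y \<subseteq> N" using X Y by auto
    fix P assume "P \<in> submods R M" "X \<union> Y \<subseteq> P \<and> P \<subseteq> N"
    then show "P \<in> a \<inter> b" using X Y by blast
  qed
next
  case (UN K)
  obtain k where k: "k \<in> K" "N \<in> k" using UN.prems by blast
  obtain X where X: "finite X \<and> X \<subseteq> carrier M \<and> X \<subseteq> N \<and> (\<forall>P\<in>submods R M. X \<subseteq> P \<and> P \<subseteq> N \<longrightarrow> P \<in> k)"
    using UN.IH[OF k(1) k(2) UN.prems(2)] by (elim exE)
  show ?case
  proof (intro exI[of _ X] conjI ballI impI)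
    show "finite X" "X \<subseteq> carrier M" "X \<subseteq> N" using X by auto
    fix P assume "P \<in> submods R M" "X \<subseteq> P \<and> P \<subseteq> N"
    then have "P \<in> k" using X by blast
    then show "P \<in> \<Union>K" using k(1) by blast
  qed
next
  case (Basis s)
  let ?T = "zariski_submods R M"
  show ?case
  proof (cases "openin ?T s")
    case True
    from open_up[OF True Basis.prems(1)] obtain X where
      X: "finite X \<and> X \<subseteq> carrier M \<and> X \<subseteq> N \<and> zariski_basic R M X \<subseteq> s" by (elim exE)
    show ?thesis
    proof (intro exI[of _ X] conjI ballI impI)
      show "finite X" "X \<subseteq> carrier M" "X \<subseteq> N" using X by auto
      fix P assume "P \<in> submods R M" "X \<subseteq> P \<and> P \<subseteq> N"
      then have "P \<in> zariski_basic R M X" by (simp add: zariski_basic_def)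
      then show "P \<in> s" using X by blast
    qed
  next
    case False
    then obtain U where U: "openin ?T U" "s = topspace ?T - U" using Basis.hyps by blast
    have NU: "N \<notin> U" using Basis.prems(1) U(2) by blast
    show ?thesis
    proof (intro exI[of _ "{}"] conjI ballI impI)
      fix P assume P: "P \<in> submods R M" "{} \<subseteq> P \<and> P \<subseteq> N"
      have "P \<notin> U"
      proof
        assume "P \<in> U"
        then have "N \<in> U" using open_upward[OF U(1) _ Basis.prems(2)] P by blast
        then show False using NU by blast
      qed
      moreover have "P \<in> topspace ?T" using P(1) by (simp add: topspace_Z)
      ultimately show "P \<in> s" using U(2) by blast
    qed auto
  qed
qed

lemma part1:
  assumes M: "module R M"
  shows "(constructible_topology (zariski_submods R M)) closure_of (fg_submods R M) = submods R M"
proof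
  show "constructible_topology (zariski_submods R M) closure_of fg_submods R M \<subseteq> submods R M"
    using closure_of_subset_topspace[of "constructible_topology (zariski_submods R M)" "fg_submods R M"]
    by (simp add: constr_topspace[OF M])
  show "submods R M \<subseteq> constructible_topology (zariski_submods R M) closure_of fg_submods R M"
  proof
    fix N assume N: "N \<in> submods R M"
    show "N \<in> constructible_topology (zariski_submods R M) closure_of fg_submods R M"
      unfolding closure_of_def
    proof (intro CollectI conjI allI impI)
      show "N \<in> topspace (constructible_topology (zariski_submods R M))" using N by (simp add: constr_topspace[OF M])
      fix W assume W: "N \<in> W \<and> openin (constructible_topology (zariski_submods R M)) W"
      then have g: "generate_topology_on ({U. openin (zariski_submods R M) U \<and> compactin (zariski_submods R M) U} \<union>
          {topspace (zariski_submods R M) - U | U. openin (zariski_submods R M) U \<and> compactin (zariski_submods R M) U}) W"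
        unfolding constructible_topology_def by (simp add: openin_topology_generated_by_iff)
      obtain X where X: "finite X \<and> X \<subseteq> carrier M \<and> X \<subseteq> N \<and> (\<forall>P\<in>submods R M. X \<subseteq> P \<and> P \<subseteq> N \<longrightarrow> P \<in> W)"
        using constr_open_interval[OF M g _ N] W by blast
      have gs: "submodule (gen_submod R M X) R M" using gen_sub[OF M] X by blast
      have "gen_submod R M X \<subseteq> N" by (rule gen_min) (use N X in \<open>auto simp: submods_def\<close>)
      then have "gen_submod R M X \<in> W" using X gs gen_incl[of X R M] by (auto simp: submods_def)
      moreover have "gen_submod R M X \<in> fg_submods R M" using gen_fg[OF M] X by blast
      ultimately show "\<exists>y\<in>fg_submods R M. y \<in> W" by blast
    qed
  qed
qed



lemma noeth_max:
  assumes N: "noetherian_module R M" and ne: "\<Z> \<noteq> {}" and sub: "\<Z> \<subseteq> submods R M"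
  shows "\<exists>P\<in>\<Z>. \<forall>Q\<in>\<Z>. P \<subseteq> Q \<longrightarrow> Q = P"
proof (rule ccontr)
  assume "\<not> (\<exists>P\<in>\<Z>. \<forall>Q\<in>\<Z>. P \<subseteq> Q \<longrightarrow> Q = P)"
  then have step: "\<forall>P\<in>\<Z>. \<exists>Q. Q \<in> \<Z> \<and> P \<subset> Q" by blast
  define f where "f P = (SOME Q. Q \<in> \<Z> \<and> P \<subset> Q)" for P
  have f: "f P \<in> \<Z> \<and> P \<subset> f P" if "P \<in> \<Z>" for P
    unfolding f_def by (rule someI_ex) (use step that in blast)
  obtain P0 where P0: "P0 \<in> \<Z>" using ne by blast
  define C where "C n = (f ^^ n) P0" for n
  have CZ: "C n \<in> \<Z>" for n
    by (induction n) (simp_all add: C_def P0 f)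
  have Cs: "C n \<subset> C (Suc n)" for n using f[OF CZ[of n]] by (simp add: C_def)
  have h1: "\<forall>n. submodule (C n) R M" using CZ sub by (auto simp: submods_def)
  have h2: "\<forall>n. C n \<subseteq> C (Suc n)" using Cs by blast
  have imp: "(\<forall>n. submodule (C n) R M) \<and> (\<forall>n. C n \<subseteq> C (Suc n)) \<longrightarrow> (\<exists>k. \<forall>n\<ge>k. C n = C k)"
    using N unfolding noetherian_module_def by (rule spec)
  have "\<exists>k. \<forall>n\<ge>k. C n = C k" by (rule mp[OF imp conjI[OF h1 h2]])
  then obtain k where k: "\<forall>n\<ge>k. C n = C k" by (elim exE)
  have "C (Suc k) = C k" by (rule k[rule_format]) simp
  then show False using Cs[of k] by simp
qed

lemma fg_gen: "P \<in> fg_submods R M \<Longrightarrow> \<exists>X. finite X \<and> X \<subseteq> carrier M \<and> P = gen_submod R M X"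
  unfolding fg_submods_def by blast

lemma noeth_fg:
  assumes M: "module R M" and Nn: "noetherian_module R M" and N: "submodule N R M"
  shows "N \<in> fg_submods R M"
proof -
  define \<Z> where "\<Z> = {gen_submod R M X | X. finite X \<and> X \<subseteq> N}"
  have Nc: "N \<subseteq> carrier M" using submod_carrier[OF M N] .
  have "gen_submod R M {} \<in> \<Z>" unfolding \<Z>_def by blast
  then have ne: "\<Z> \<noteq> {}" by blast
  have sub: "\<Z> \<subseteq> submods R M"
  proof
    fix P assume "P \<in> \<Z>"
    then obtain X where "P = gen_submod R M X" "X \<subseteq> N" unfolding \<Z>_def by blast
    then show "P \<in> submods R M" using gen_sub[OF M] Nc by (auto simp: submods_def)
  qed
  obtain P where P: "P \<in> \<Z>" "\<forall>Q\<in>\<Z>. P \<subseteq> Q \<longrightarrow> Q = P" using noeth_max[OF Nn ne sub] by blast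
  obtain X0 where X0: "P = gen_submod R M X0" "finite X0" "X0 \<subseteq> N" using P(1) unfolding \<Z>_def by blast
  have "N \<subseteq> P"
  proof
    fix x assume x: "x \<in> N"
    have Q: "gen_submod R M (insert x X0) \<in> \<Z>" using X0 x unfolding \<Z>_def by blast
    have "submodule (gen_submod R M (insert x X0)) R M" using gen_sub[OF M] X0 x Nc by blast
    then have "P \<subseteq> gen_submod R M (insert x X0)" unfolding X0(1)
      by (rule gen_min) (use gen_incl[of "insert x X0" R M] in blast)
    then have "gen_submod R M (insert x X0) = P" using P(2) Q by blast
    then show "x \<in> P" using gen_incl[of "insert x X0" R M] by blast
  qed
  moreover have "P \<subseteq> N" unfolding X0(1) by (rule gen_min[OF N X0(3)])
  ultimately have "N = gen_submod R M X0" using X0(1) by blast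
  then show ?thesis unfolding fg_submods_def using N X0 Nc by blast
qed

lemma open_eq_union:
  assumes "openin (zariski_submods R M) W"
  shows "W = \<Union>{zariski_basic R M X | X. finite X \<and> X \<subseteq> carrier M \<and> zariski_basic R M X \<subseteq> W}"
proof
  show "W \<subseteq> \<Union>{zariski_basic R M X | X. finite X \<and> X \<subseteq> carrier M \<and> zariski_basic R M X \<subseteq> W}"
  proof
    fix N assume N: "N \<in> W"
    from open_up[OF assms N] obtain X where X: "finite X \<and> X \<subseteq> carrier M \<and> X \<subseteq> N \<and> zariski_basic R M X \<subseteq> W"
      by (elim exE)
    have "N \<in> topspace (zariski_submods R M)" by (rule subsetD[OF openin_subset[OF assms] N])
    then have "N \<in> submods R M" by (simp add: topspace_Z)
    then have "N \<in> zariski_basic R M X" using X by (simp add: zariski_basic_def)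
    then show "N \<in> \<Union>{zariski_basic R M X | X. finite X \<and> X \<subseteq> carrier M \<and> zariski_basic R M X \<subseteq> W}" using X by blast
  qed
  show "\<Union>{zariski_basic R M X | X. finite X \<and> X \<subseteq> carrier M \<and> zariski_basic R M X \<subseteq> W} \<subseteq> W"
  proof (rule Union_least)
    fix S assume "S \<in> {zariski_basic R M X | X. finite X \<and> X \<subseteq> carrier M \<and> zariski_basic R M X \<subseteq> W}"
    then show "S \<subseteq> W" by blast
  qed
qed

lemma noeth_spectral:
  assumes M: "module R M" and Nn: "noetherian_module R M"
  shows "spectral_space (zariski_submods R M)"
  unfolding spectral_space_def
proof (intro conjI allI impI)
  let ?T = "zariski_submods R M"
  show "t0_space ?T" unfolding t0_space_def
  proof (intro ballI impI)
    fix x y assume x: "x \<in> topspace ?T" and y: "y \<in> topspace ?T" and xy: "x \<noteq> y"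
    have xs: "submodule x R M" "submodule y R M" using x y by (simp_all add: topspace_Z submods_def)
    obtain e where e: "(e \<in> x \<and> e \<notin> y) \<or> (e \<in> y \<and> e \<notin> x)" using xy by blast
    have ec: "e \<in> carrier M" using e submod_carrier[OF M xs(1)] submod_carrier[OF M xs(2)] by blast
    have op: "openin ?T (zariski_basic R M {e})" by (rule open_basic) (use ec in auto)
    have "(x \<notin> zariski_basic R M {e}) = (y \<in> zariski_basic R M {e})"
      using e xs by (auto simp: zariski_basic_def submods_def)
    then show "\<exists>U. openin ?T U \<and> (x \<notin> U) = (y \<in> U)" using op by blast
  qed
  show "compact_space ?T" unfolding compact_space_def topspace_Z using whole_compact_open[OF M] by simp
  fix U V assume "openin ?T U \<and> compactin ?T U \<and> openin ?T V \<and> compactin ?T V"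
  then show "compactin ?T (U \<inter> V)" using compact_open_Int[OF M] by blast
next
  let ?T = "zariski_submods R M"
  fix W assume W: "openin ?T W"
  let ?C = "{zariski_basic R M X | X. finite X \<and> X \<subseteq> carrier M \<and> zariski_basic R M X \<subseteq> W}"
  have "\<forall>C\<in>?C. openin ?T C \<and> compactin ?T C"
  proof
    fix C assume "C \<in> ?C"
    then obtain X where X: "C = zariski_basic R M X" "finite X" "X \<subseteq> carrier M" by blast
    show "openin ?T C \<and> compactin ?T C" unfolding X(1) using open_basic[OF X(2,3)] basic_compact[OF M X(2,3)] by blast
  qed
  then show "\<exists>\<C>. (\<forall>C\<in>\<C>. openin ?T C \<and> compactin ?T C) \<and> W = \<Union>\<C>"
    using open_eq_union[OF W] by blast
next
  let ?T = "zariski_submods R M"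
  fix Z assume Z: "closedin ?T Z \<and> irreducible_in ?T Z"
  have Zs: "Z \<subseteq> submods R M" using Z unfolding irreducible_in_def by (simp add: topspace_Z)
  have Zne: "Z \<noteq> {}" using Z unfolding irreducible_in_def by blast
  obtain G where G: "G \<in> Z" "\<forall>Q\<in>Z. G \<subseteq> Q \<longrightarrow> Q = G" using noeth_max[OF Nn Zne Zs] by blast
  have below: "P \<subseteq> G" if P: "P \<in> Z" for P
  proof -
    have Pf: "P \<in> fg_submods R M" using noeth_fg[OF M Nn] P Zs by (auto simp: submods_def)
    have Gf: "G \<in> fg_submods R M" using noeth_fg[OF M Nn] G(1) Zs by (auto simp: submods_def)
    obtain XP where XP: "finite XP" "XP \<subseteq> carrier M" "P = gen_submod R M XP" using fg_gen[OF Pf] by blast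
    obtain XG where XG: "finite XG" "XG \<subseteq> carrier M" "G = gen_submod R M XG" using fg_gen[OF Gf] by blast
    let ?A = "topspace ?T - zariski_basic R M XP"
    let ?B = "topspace ?T - zariski_basic R M XG"
    have cA: "closedin ?T ?A" by (rule closedin_diff[OF closedin_topspace open_basic[OF XP(1,2)]])
    have cB: "closedin ?T ?B" by (rule closedin_diff[OF closedin_topspace open_basic[OF XG(1,2)]])
    have "P \<in> submods R M" "G \<in> submods R M" using P G(1) Zs by blast+
    then have "P \<in> zariski_basic R M XP" "G \<in> zariski_basic R M XG"
      using gen_incl[of XP R M] XP(3) gen_incl[of XG R M] XG(3) by (simp_all add: zariski_basic_def)
    then have PA: "P \<notin> ?A" and GB: "G \<notin> ?B" by blast+
    have "\<not> (Z \<subseteq> ?A \<union> ?B)"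
    proof
      assume "Z \<subseteq> ?A \<union> ?B"
      then have "Z \<subseteq> ?A \<or> Z \<subseteq> ?B" using Z cA cB unfolding irreducible_in_def by blast
      then show False using PA GB P G(1) by blast
    qed
    then obtain S where S: "S \<in> Z" "S \<notin> ?A" "S \<notin> ?B" by blast
    have Ss: "S \<in> topspace ?T" using S(1) Zs by (simp add: topspace_Z subsetD)
    have "S \<in> zariski_basic R M XP" "S \<in> zariski_basic R M XG" using S(2,3) Ss by blast+
    then have Ssub: "submodule S R M" "XP \<subseteq> S" "XG \<subseteq> S" by (simp_all add: zariski_basic_def submods_def)
    have "P \<subseteq> S" unfolding XP(3) by (rule gen_min[OF Ssub(1,2)])
    moreover have "G \<subseteq> S" unfolding XG(3) by (rule gen_min[OF Ssub(1,3)])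
    then have "S = G" using G(2) S(1) by blast
    ultimately show "P \<subseteq> G" by simp
  qed
  have Gs: "G \<in> submods R M" using G(1) Zs by blast
  have clG: "?T closure_of {G} = Z"
  proof
    show "?T closure_of {G} \<subseteq> Z" using closure_of_minimal[of "{G}" Z ?T] G(1) Z by blast
    show "Z \<subseteq> ?T closure_of {G}" unfolding closure_single[OF M Gs] using below Zs by blast
  qed
  show "\<exists>!x. x \<in> topspace ?T \<and> ?T closure_of {x} = Z"
  proof (rule ex1I[of _ G])
    show "G \<in> topspace ?T \<and> ?T closure_of {G} = Z" using Gs clG by (simp add: topspace_Z)
    fix H assume H: "H \<in> topspace ?T \<and> ?T closure_of {H} = Z"
    have Hs: "H \<in> submods R M" using H by (simp add: topspace_Z)
    have "H \<in> Z" using H closure_of_subset[of "{H}" ?T] by blast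
    then have "H \<subseteq> G" by (rule below)
    moreover have "G \<in> ?T closure_of {H}" using H G(1) by simp
    then have "G \<subseteq> H" unfolding closure_single[OF M Hs] by simp
    ultimately show "H = G" by blast
  qed
qed



lemma spectral_noeth:
  assumes M: "module R M" and Sp: "spectral_space (subtopology (zariski_submods R M) (fg_submods R M))"
  shows "noetherian_module R M"
  unfolding noetherian_module_def
proof (intro allI impI)
  let ?T = "zariski_submods R M"
  let ?S = "subtopology ?T (fg_submods R M)"
  fix C assume C: "(\<forall>n. submodule (C n) R M) \<and> (\<forall>n. C n \<subseteq> C (Suc n))"
  define N where "N = \<Union>(range C)"
  have Ns: "submodule N R M" unfolding N_def by (rule submod_chain[OF M]) (use C in blast)+
  have NS: "N \<in> submods R M" using Ns by (simp add: submods_def)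
  have Nc: "N \<subseteq> carrier M" by (rule submod_carrier[OF M Ns])
  define Z where "Z = {P \<in> fg_submods R M. P \<subseteq> N}"
  have topS: "topspace ?S = fg_submods R M" using fg_sub[of R M] by (auto simp: topspace_Z)
  have Zeq: "Z = ?T closure_of {N} \<inter> fg_submods R M"
    unfolding closure_single[OF M NS] Z_def using fg_sub[of R M] by auto
  have Zc: "closedin ?S Z" unfolding closedin_subtopology
    by (rule exI[of _ "?T closure_of {N}"]) (simp add: Zeq)
  have g0: "gen_submod R M {} \<in> Z" unfolding Z_def
    using gen_fg[OF M, of "{}"] gen_min[OF Ns, of "{}"] by simp
  have Zirr: "irreducible_in ?S Z" unfolding irreducible_in_def
  proof (intro conjI allI impI)
    show "Z \<noteq> {}" using g0 by blast
    show "Z \<subseteq> topspace ?S" unfolding topS Z_def by blast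
    fix A B assume AB: "closedin ?S A \<and> closedin ?S B \<and> Z \<subseteq> A \<union> B"
    obtain A' where A': "closedin ?T A'" "A = A' \<inter> fg_submods R M" using AB unfolding closedin_subtopology by blast
    obtain B' where B': "closedin ?T B'" "B = B' \<inter> fg_submods R M" using AB unfolding closedin_subtopology by blast
    show "Z \<subseteq> A \<or> Z \<subseteq> B"
    proof (rule ccontr)
      assume "\<not> (Z \<subseteq> A \<or> Z \<subseteq> B)"
      then obtain P Q where PQ: "P \<in> Z" "P \<notin> A" "Q \<in> Z" "Q \<notin> B" by blast
      have Pf: "P \<in> fg_submods R M" "P \<subseteq> N" and Qf: "Q \<in> fg_submods R M" "Q \<subseteq> N" using PQ by (simp_all add: Z_def)
      obtain XP where XP: "finite XP" "XP \<subseteq> carrier M" "P = gen_submod R M XP" using fg_gen[OF Pf(1)] by blast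
      obtain XQ where XQ: "finite XQ" "XQ \<subseteq> carrier M" "Q = gen_submod R M XQ" using fg_gen[OF Qf(1)] by blast
      define S where "S = gen_submod R M (XP \<union> XQ)"
      have Ssub: "submodule S R M" unfolding S_def by (rule gen_sub[OF M]) (use XP XQ in blast)
      have Sf: "S \<in> fg_submods R M" unfolding S_def by (rule gen_fg[OF M]) (use XP XQ in auto)
      have "XP \<subseteq> N" "XQ \<subseteq> N" using XP(3) XQ(3) Pf(2) Qf(2) gen_incl[of XP R M] gen_incl[of XQ R M] by blast+
      then have "S \<subseteq> N" unfolding S_def by (intro gen_min[OF Ns]) blast
      then have "S \<in> Z" using Sf by (simp add: Z_def)
      then have SAB: "S \<in> A \<or> S \<in> B" using AB by blast
      have "XP \<subseteq> S" "XQ \<subseteq> S" unfolding S_def using gen_incl[of "XP \<union> XQ" R M] by blast+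
      then have PS: "P \<subseteq> S" and QS: "Q \<subseteq> S" unfolding XP(3) XQ(3) by (simp_all add: gen_min[OF Ssub])
      have Psm: "P \<in> submods R M" "Q \<in> submods R M" using Pf(1) Qf(1) fg_sub[of R M] by blast+
      show False
      proof (cases "S \<in> A")
        case True
        then have "S \<in> A'" using A'(2) by blast
        then have "P \<in> A'" by (rule closed_down[OF A'(1) _ Psm(1) PS])
        then have "P \<in> A" using A'(2) Pf(1) by blast
        then show False using PQ(2) by blast
      next
        case False
        then have "S \<in> B'" using SAB B'(2) by blast
        then have "Q \<in> B'" by (rule closed_down[OF B'(1) _ Psm(2) QS])
        then have "Q \<in> B" using B'(2) Qf(1) by blast
        then show False using PQ(4) by blast
      qed
    qed
  qed
  have sob: "\<forall>Z. closedin ?S Z \<and> irreducible_in ?S Z \<longrightarrow> (\<exists>!x. x \<in> topspace ?S \<and> ?S closure_of {x} = Z)"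
    using Sp unfolding spectral_space_def by (elim conjE) assumption
  have "\<exists>!x. x \<in> topspace ?S \<and> ?S closure_of {x} = Z"
    by (rule mp[OF spec[OF sob, of Z] conjI[OF Zc Zirr]])
  then have "\<exists>x. x \<in> topspace ?S \<and> ?S closure_of {x} = Z" by (rule ex1_implies_ex)
  then obtain G where G0: "G \<in> topspace ?S \<and> ?S closure_of {G} = Z" by (elim exE)
  have G1: "G \<in> topspace ?S" using G0 by (rule conjunct1)
  have G2: "?S closure_of {G} = Z" using G0 by (rule conjunct2)
  note G = G1 G2
  have Gf: "G \<in> fg_submods R M" using G(1) topS by simp
  have Gs: "G \<in> submods R M" using Gf fg_sub[of R M] by blast
  have "?S closure_of {G} = fg_submods R M \<inter> (?T closure_of (fg_submods R M \<inter> {G}))"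
    by (rule closure_of_subtopology)
  also have "\<dots> = {P \<in> fg_submods R M. P \<subseteq> G}"
    using Gf fg_sub[of R M] by (auto simp: closure_single[OF M Gs])
  finally have ZG: "Z = {P \<in> fg_submods R M. P \<subseteq> G}" using G(2) by simp
  have "G \<in> Z" unfolding ZG using Gf by simp
  then have GN: "G \<subseteq> N" unfolding Z_def by simp
  have NG: "N \<subseteq> G"
  proof
    fix x assume x: "x \<in> N"
    have xc: "x \<in> carrier M" using x Nc by blast
    have "gen_submod R M {x} \<in> fg_submods R M" by (rule gen_fg[OF M]) (use xc in auto)
    moreover have "gen_submod R M {x} \<subseteq> N" by (rule gen_min[OF Ns]) (use x in simp)
    ultimately have "gen_submod R M {x} \<in> Z" by (simp add: Z_def)
    then have "gen_submod R M {x} \<subseteq> G" unfolding ZG by simp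
    then show "x \<in> G" using gen_incl[of "{x}" R M] by blast
  qed
  obtain X where X: "finite X" "X \<subseteq> carrier M" "G = gen_submod R M X" using fg_gen[OF Gf] by blast
  have "X \<subseteq> N" using X(3) GN gen_incl[of X R M] by blast
  then obtain k where k: "X \<subseteq> C k" using finite_in_chain[of C X] C X(1) unfolding N_def by blast
  have "G \<subseteq> C k" unfolding X(3) by (rule gen_min) (use C k in blast)+
  have "\<forall>n\<ge>k. C n = C k"
  proof (intro allI impI)
    fix n assume "k \<le> n"
    then have "C k \<subseteq> C n" using chain_mono[of C k n] C by blast
    moreover have "C n \<subseteq> N" unfolding N_def by blast
    ultimately show "C n = C k" using NG \<open>G \<subseteq> C k\<close> by blast
  qed
  then show "\<exists>k. \<forall>n\<ge>k. C n = C k" by blast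
qed

theorem proposition5p1:
  fixes R :: "('a, 'c) ring_scheme" and M :: "('a, 'b, 'd) module_scheme"
  assumes "module R M"
  shows "(constructible_topology (zariski_submods R M)) closure_of (fg_submods R M) = submods R M
         \<and> (spectral_space (subtopology (zariski_submods R M) (fg_submods R M)) \<longleftrightarrow> noetherian_module R M)"
proof (intro conjI iffI)
  show "(constructible_topology (zariski_submods R M)) closure_of (fg_submods R M) = submods R M"
    by (rule part1[OF assms])
  show "noetherian_module R M" if "spectral_space (subtopology (zariski_submods R M) (fg_submods R M))"
    by (rule spectral_noeth[OF assms that])
  assume Nn: "noetherian_module R M"
  have "fg_submods R M = submods R M"
  proof
    show "fg_submods R M \<subseteq> submods R M" by (rule fg_sub)
    show "submods R M \<subseteq> fg_submods R M" using noeth_fg[OF assms Nn] by (auto simp: submods_def)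
  qed
  then have "subtopology (zariski_submods R M) (fg_submods R M) = zariski_submods R M"
    by (simp add: topspace_Z[symmetric])
  then show "spectral_space (subtopology (zariski_submods R M) (fg_submods R M))"
    using noeth_spectral[OF assms Nn] by simp
qed

end
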